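(* Let $H$ be a component of $G[\overline{C}]$ and let $v\in N_H(x_1)$. Then $H$ contains exactly one path $P$ such that $P$ is a $v,w$-path for some $w\in N_H(x_2)$. The same statement holds with the roles of $x_1$ and $x_2$ interchanged.
   Context: All graphs are simple. $\mathcal{G}^*$ denotes the class of graphs in which any two distinct odd cycles share at most one edge. Standing setting: $G\in\mathcal{G}^*$ is $2$-connected, and $C$ is a longest odd cycle of $G$ with $|C|\ge 5$. We also write $C$ for its vertex set. Let $\overline{C}=V(G)\setminus C$, assumed nonempty. For $v\in\overline{C}$ and $w\in C$, $v$ touches $w$ if there is a $v,w$-path meeting $C$ only at $w$. $T(v)=\{w\in C: v \text{ touches } w\}$. In this setting, $T(v)$ is the same set for all $v\in\overline{C}$; this set is $\{x_1,x_2\}$ for two adjacent vertices $x_1,x_2$ of $C$. For $u\in V(G)$, write $N_H(u)=N(u)\cap V(H)$. *)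

theory Defs
  imports Main
begin

definition sgraph :: "'a set \<Rightarrow> ('a \<Rightarrow> 'a \<Rightarrow> bool) \<Rightarrow> bool" where
  "sgraph V E \<longleftrightarrow> finite V \<and> (\<forall>u v. E u v \<longrightarrow> u \<in> V \<and> v \<in> V \<and> u \<noteq> v \<and> E v u)"

definition is_path :: "('a \<Rightarrow> 'a \<Rightarrow> bool) \<Rightarrow> 'a set \<Rightarrow> 'a list \<Rightarrow> bool" where
  "is_path E S P \<longleftrightarrow> P \<noteq> [] \<and> distinct P \<and> set P \<subseteq> S \<and>
     (\<forall>i. Suc i < length P \<longrightarrow> E (P ! i) (P ! Suc i))"

definition is_cycle :: "'a set \<Rightarrow> ('a \<Rightarrow> 'a \<Rightarrow> bool) \<Rightarrow> 'a list \<Rightarrow> bool" where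
  "is_cycle V E C \<longleftrightarrow> 3 \<le> length C \<and> is_path E V C \<and> E (last C) (hd C)"

definition cyc_edges :: "'a list \<Rightarrow> 'a set set" where
  "cyc_edges C = {{C ! i, C ! ((i + 1) mod length C)} | i. i < length C}"

definition odd_cycle :: "'a set \<Rightarrow> ('a \<Rightarrow> 'a \<Rightarrow> bool) \<Rightarrow> 'a list \<Rightarrow> bool" where
  "odd_cycle V E C \<longleftrightarrow> is_cycle V E C \<and> odd (length C)"

text \<open>Class G*: any two distinct odd cycles (as subgraphs, i.e. edge sets) share at most one edge.\<close>
definition in_Gstar :: "'a set \<Rightarrow> ('a \<Rightarrow> 'a \<Rightarrow> bool) \<Rightarrow> bool" where
  "in_Gstar V E \<longleftrightarrow> (\<forall>C D. odd_cycle V E C \<longrightarrow> odd_cycle V E D \<longrightarrow>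
      cyc_edges C \<noteq> cyc_edges D \<longrightarrow> card (cyc_edges C \<inter> cyc_edges D) \<le> 1)"

definition conn_on :: "('a \<Rightarrow> 'a \<Rightarrow> bool) \<Rightarrow> 'a set \<Rightarrow> bool" where
  "conn_on E S \<longleftrightarrow> (\<forall>u\<in>S. \<forall>v\<in>S. \<exists>P. is_path E S P \<and> hd P = u \<and> last P = v)"

definition two_connected :: "'a set \<Rightarrow> ('a \<Rightarrow> 'a \<Rightarrow> bool) \<Rightarrow> bool" where
  "two_connected V E \<longleftrightarrow> 3 \<le> card V \<and> conn_on E V \<and> (\<forall>x\<in>V. conn_on E (V - {x}))"

definition longest_odd_cycle :: "'a set \<Rightarrow> ('a \<Rightarrow> 'a \<Rightarrow> bool) \<Rightarrow> 'a list \<Rightarrow> bool" where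
  "longest_odd_cycle V E C \<longleftrightarrow> odd_cycle V E C \<and> (\<forall>D. odd_cycle V E D \<longrightarrow> length D \<le> length C)"

definition touches :: "'a set \<Rightarrow> ('a \<Rightarrow> 'a \<Rightarrow> bool) \<Rightarrow> 'a set \<Rightarrow> 'a \<Rightarrow> 'a \<Rightarrow> bool" where
  "touches V E Cs v w \<longleftrightarrow> w \<in> Cs \<and>
     (\<exists>P. is_path E V P \<and> hd P = v \<and> last P = w \<and> set P \<inter> Cs = {w})"

definition touch_set :: "'a set \<Rightarrow> ('a \<Rightarrow> 'a \<Rightarrow> bool) \<Rightarrow> 'a set \<Rightarrow> 'a \<Rightarrow> 'a set" where
  "touch_set V E Cs v = {w. touches V E Cs v w}"

text \<open>H is (the vertex set of) a connected component of the induced subgraph G[S].\<close>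
definition component :: "('a \<Rightarrow> 'a \<Rightarrow> bool) \<Rightarrow> 'a set \<Rightarrow> 'a set \<Rightarrow> bool" where
  "component E S H \<longleftrightarrow> H \<noteq> {} \<and> H \<subseteq> S \<and> conn_on E H \<and>
     (\<forall>u\<in>H. \<forall>x\<in>S. E u x \<longrightarrow> x \<in> H)"

definition nbr_in :: "('a \<Rightarrow> 'a \<Rightarrow> bool) \<Rightarrow> 'a set \<Rightarrow> 'a \<Rightarrow> 'a set" where
  "nbr_in E H u = {x \<in> H. E u x}"

end

theory Submission
  imports Defs
begin

lemma is_path_succ: "is_path E S P \<longleftrightarrow> P \<noteq> [] \<and> distinct P \<and> set P \<subseteq> S \<and> successively E P"
  unfolding is_path_def successively_conv_nth by simp

lemma cyc_edges_consec: "Suc k < length L \<Longrightarrow> {L!k, L!Suc k} \<in> cyc_edges L"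
  unfolding cyc_edges_def by (rule CollectI, rule exI[of _ k]) simp

lemma cyc_edges_wrap: "L \<noteq> [] \<Longrightarrow> {last L, hd L} \<in> cyc_edges L"
  unfolding cyc_edges_def
  apply (rule CollectI, rule exI[of _ "length L - 1"])
  by (simp add: last_conv_nth hd_conv_nth)

lemma cyc_edges_sub: "e \<in> cyc_edges L \<Longrightarrow> e \<subseteq> set L"
  unfolding cyc_edges_def by (auto intro!: nth_mem mod_less_divisor)

lemma finite_cyc_edges: "finite (cyc_edges L)"
proof -
  have "cyc_edges L = (\<lambda>i. {L ! i, L ! ((i + 1) mod length L)}) ` {..<length L}"
    unfolding cyc_edges_def by auto
  thus ?thesis by simp
qed

lemma cyc_edges_E:
  assumes "sgraph V E" "is_cycle V E L" "{u,w} \<in> cyc_edges L"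
  shows "E u w"
proof -
  obtain i where i: "i < length L" "{u,w} = {L ! i, L ! ((i + 1) mod length L)}"
    using assms(3) unfolding cyc_edges_def by auto
  have "E (L ! i) (L ! ((i + 1) mod length L))"
  proof (cases "Suc i < length L")
    case True thus ?thesis using assms(2) unfolding is_cycle_def is_path_def by auto
  next
    case False
    hence "Suc i = length L" using i by simp
    hence "i = length L - 1" "(i+1) mod length L = 0" by auto
    thus ?thesis using assms(2) i unfolding is_cycle_def
      by (metis hd_conv_nth last_conv_nth list.size(3) not_less0)
  qed
  thus ?thesis using i(2) assms(1) unfolding sgraph_def doubleton_eq_iff by auto
qed

lemma cyc_nbr:
  assumes "distinct L" "2 \<le> length L" "k < length L" "{L!k, y} \<in> cyc_edges L"
  shows "y = L ! ((k+1) mod length L) \<or> (0 < k \<and> y = L ! (k - 1)) \<or> (k = 0 \<and> y = L ! (length L - 1))"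
proof -
  obtain i where i: "i < length L" "{L!k, y} = {L ! i, L ! ((i + 1) mod length L)}"
    using assms(4) unfolding cyc_edges_def by auto
  have m: "(i+1) mod length L < length L" using assms by (intro mod_less_divisor) auto
  from i(2) consider "L!k = L!i" "y = L ! ((i + 1) mod length L)" | "L!k = L ! ((i + 1) mod length L)" "y = L!i"
    unfolding doubleton_eq_iff by blast
  thus ?thesis
  proof cases
    case 1
    hence "k = i" using assms i nth_eq_iff_index_eq by metis
    thus ?thesis using 1 by simp
  next
    case 2
    hence ki: "k = (i+1) mod length L" using assms i m nth_eq_iff_index_eq by metis
    show ?thesis
    proof (cases "Suc i < length L")
      case True thus ?thesis using ki 2 by auto
    next
      case False
      hence "Suc i = length L" using i by simp
      hence "k = 0" "i = length L - 1" using ki by auto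
      thus ?thesis using 2 by auto
    qed
  qed
qed

definition goodarc :: "'a list \<Rightarrow> 'a list \<Rightarrow> bool" where
  "goodarc C A \<longleftrightarrow> distinct A \<and> set A \<subseteq> set C \<and> successively (\<lambda>u w. {u,w} \<in> cyc_edges C) A"

lemma goodarc_rev: "goodarc C A \<Longrightarrow> goodarc C (rev A)"
  unfolding goodarc_def by (simp add: insert_commute)

lemma arcs_lt:
  assumes "distinct C" "a < b" "b < length C"
  shows "\<exists>A1 A2. goodarc C A1 \<and> goodarc C A2 \<and> hd A1 = C!a \<and> last A1 = C!b
     \<and> hd A2 = C!b \<and> last A2 = C!a \<and> length A1 + length A2 = length C + 2
     \<and> 2 \<le> length A1 \<and> 2 \<le> length A2"
proof -
  let ?n = "length C"
  define A1 where "A1 = take (b-a+1) (drop a C)"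
  define A2 where "A2 = drop b C @ take (a+1) C"
  have l1: "length A1 = b-a+1" unfolding A1_def using assms by auto
  have l2: "length A2 = ?n - b + a + 1" unfolding A2_def using assms by auto
  have n1: "\<And>k. k < length A1 \<Longrightarrow> A1 ! k = C ! (a+k)" unfolding A1_def using assms l1 by auto
  have g1: "goodarc C A1" unfolding goodarc_def
  proof (intro conjI)
    show "distinct A1" unfolding A1_def using assms by simp
    show "set A1 \<subseteq> set C" unfolding A1_def using set_drop_subset[of a C] set_take_subset[of "b-a+1" "drop a C"] by simp
    show "successively (\<lambda>u w. {u,w} \<in> cyc_edges C) A1"
      unfolding successively_conv_nth
    proof (intro allI impI)
      fix i assume "Suc i < length A1"
      thus "{A1!i, A1!Suc i} \<in> cyc_edges C" using n1 l1 assms cyc_edges_consec[of "a+i" C]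
        by simp
    qed
  qed
  have sd: "successively (\<lambda>u w. {u,w} \<in> cyc_edges C) (drop b C)"
    unfolding successively_conv_nth
  proof (intro allI impI)
    fix i assume "Suc i < length (drop b C)"
    thus "{drop b C!i, drop b C!Suc i} \<in> cyc_edges C" using cyc_edges_consec[of "b+i" C]
      by simp
  qed
  have st: "successively (\<lambda>u w. {u,w} \<in> cyc_edges C) (take (a+1) C)"
    unfolding successively_conv_nth
  proof (intro allI impI)
    fix i assume "Suc i < length (take (a+1) C)"
    thus "{take (a+1) C!i, take (a+1) C!Suc i} \<in> cyc_edges C" using cyc_edges_consec[of "i" C]
      by simp
  qed
  have ne: "C \<noteq> []" using assms by auto
  have ld: "last (drop b C) = last C" using assms by simp
  have ht: "hd (take (a+1) C) = hd C" using ne by simp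
  have g2: "goodarc C A2" unfolding goodarc_def
  proof (intro conjI)
    show "distinct A2" unfolding A2_def using assms set_take_disj_set_drop_if_distinct[of C "a+1" b]
      by (simp add: disjoint_iff) blast
    show "set A2 \<subseteq> set C" unfolding A2_def using set_drop_subset[of b C] set_take_subset[of "a+1" C] by simp
    show "successively (\<lambda>u w. {u,w} \<in> cyc_edges C) A2" unfolding A2_def successively_append_iff
      using sd st ld ht cyc_edges_wrap[OF ne] by simp
  qed
  have "hd A1 = C!a" using n1[of 0] l1 by (subst hd_conv_nth) auto
  moreover have "last A1 = C!b" using n1[of "b-a"] l1 assms by (subst last_conv_nth) auto
  moreover have "hd A2 = C!b" unfolding A2_def using assms by (simp add: hd_drop_conv_nth)
  moreover have "last A2 = C!a" unfolding A2_def using assms by (simp add: take_Suc_conv_app_nth)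
  ultimately show ?thesis using g1 g2 l1 l2 assms by (intro exI[of _ A1] exI[of _ A2]) auto
qed

lemma arcs:
  assumes "distinct C" "i \<noteq> j" "i < length C" "j < length C"
  shows "\<exists>A1 A2. goodarc C A1 \<and> goodarc C A2 \<and> hd A1 = C!i \<and> last A1 = C!j
     \<and> hd A2 = C!i \<and> last A2 = C!j \<and> length A1 + length A2 = length C + 2
     \<and> 2 \<le> length A1 \<and> 2 \<le> length A2"
proof (cases "i < j")
  case True
  then obtain A1 A2 where "goodarc C A1 \<and> goodarc C A2 \<and> hd A1 = C!i \<and> last A1 = C!j
     \<and> hd A2 = C!j \<and> last A2 = C!i \<and> length A1 + length A2 = length C + 2
     \<and> 2 \<le> length A1 \<and> 2 \<le> length A2" using arcs_lt[OF assms(1) True assms(4)] by blast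
  thus ?thesis by (intro exI[of _ A1] exI[of _ "rev A2"]) (auto simp: goodarc_rev hd_rev last_rev)
next
  case False
  hence "j < i" using assms by simp
  then obtain A1 A2 where "goodarc C A1 \<and> goodarc C A2 \<and> hd A1 = C!j \<and> last A1 = C!i
     \<and> hd A2 = C!i \<and> last A2 = C!j \<and> length A1 + length A2 = length C + 2
     \<and> 2 \<le> length A1 \<and> 2 \<le> length A2" using arcs_lt[OF assms(1) _ assms(3)] by blast
  thus ?thesis by (intro exI[of _ "rev A1"] exI[of _ A2]) (auto simp: goodarc_rev hd_rev last_rev)
qed


lemma goodarc_path:
  assumes "sgraph V E" "is_cycle V E C" "goodarc C A" "A \<noteq> []"
  shows "is_path E (set C) A"
  using assms(3,4) cyc_edges_E[OF assms(1,2)] unfolding is_path_succ goodarc_def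
  by (auto elim: successively_mono)

lemma mk_cycle:
  assumes "is_path E U P" "U \<inter> set C = {}" "U \<subseteq> V" "set C \<subseteq> V"
    "is_path E (set C) A" "2 \<le> length A" "E (last P) (hd A)" "E (last A) (hd P)"
  shows "is_cycle V E (P@A)"
proof -
  have "P \<noteq> []" "A \<noteq> []" using assms unfolding is_path_def by auto
  hence "3 \<le> length P + length A" using assms(6) by (cases P) auto
  thus ?thesis using assms unfolding is_cycle_def is_path_succ successively_append_iff
    by auto
qed

lemma gstar_arc:
  assumes "in_Gstar V E" "odd_cycle V E C" "odd_cycle V E (P@A)" "goodarc C A" "3 \<le> length A"
    "P \<noteq> []" "set P \<inter> set C = {}"
  shows False
proof -
  let ?L = "P@A"
  let ?R = "\<lambda>u w. {u,w} \<in> cyc_edges C"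
  have dA: "distinct A" and sA: "successively ?R A" using assms(4) unfolding goodarc_def by auto
  have e1C: "{A!0,A!Suc 0} \<in> cyc_edges C" using successively_nth[OF sA, of 0] assms(5) by simp
  have e2C: "{A!1,A!Suc 1} \<in> cyc_edges C" using successively_nth[OF sA, of 1] assms(5) by simp
  have e1L: "{A!0,A!Suc 0} \<in> cyc_edges ?L" using cyc_edges_consec[of "length P" ?L] assms(5)
    by (simp add: nth_append)
  have e2L: "{A!1,A!Suc 1} \<in> cyc_edges ?L" using cyc_edges_consec[of "length P + 1" ?L] assms(5)
    by (simp add: nth_append numeral_2_eq_2)
  have ne: "{A!0,A!Suc 0} \<noteq> {A!1,A!Suc 1}"
  proof
    assume "{A!0,A!Suc 0} = {A!1,A!Suc 1}"
    hence "A!0 = A!1 \<or> A!0 = A!2" by (auto simp: doubleton_eq_iff numeral_2_eq_2)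
    moreover have "length A > 2" using assms(5) by simp
    moreover have "A \<noteq> []" using assms(5) by auto
    ultimately show False using nth_eq_iff_index_eq[OF dA, of 0 1] nth_eq_iff_index_eq[OF dA, of 0 2] by auto
  qed
  have "cyc_edges ?L \<noteq> cyc_edges C"
  proof
    assume eq: "cyc_edges ?L = cyc_edges C"
    have "{last ?L, hd ?L} \<in> cyc_edges ?L" using cyc_edges_wrap[of ?L] assms(6) by simp
    hence "hd ?L \<in> set C" using eq cyc_edges_sub by blast
    moreover have "hd ?L \<in> set P" using assms(6) by simp
    ultimately show False using assms(7) by blast
  qed
  hence "card (cyc_edges ?L \<inter> cyc_edges C) \<le> 1" using assms(1-3) unfolding in_Gstar_def by blast
  moreover have "{{A!0,A!Suc 0}, {A!1,A!Suc 1}} \<subseteq> cyc_edges ?L \<inter> cyc_edges C"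
    using e1C e2C e1L e2L by auto
  hence "card {{A!0,A!Suc 0}, {A!1,A!Suc 1}} \<le> card (cyc_edges ?L \<inter> cyc_edges C)"
    by (intro card_mono) (auto simp: finite_cyc_edges)
  ultimately show False using ne by simp
qed


lemma sg_sym: "sgraph V E \<Longrightarrow> E u w \<Longrightarrow> E w u"
  unfolding sgraph_def by blast

lemma odd_P:
  assumes sg: "sgraph V E" and gs: "in_Gstar V E" and oc: "odd_cycle V E C"
    and x: "x1 \<in> set C" "x2 \<in> set C" "x1 \<noteq> x2"
    and H: "H \<inter> set C = {}" "H \<subseteq> V" and P: "is_path E H P" "E x1 (hd P)" "E x2 (last P)"
  shows "odd (length P)"
proof (rule ccontr)
  assume ev: "\<not> odd (length P)"
  have cyc: "is_cycle V E C" using oc unfolding odd_cycle_def by simp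
  hence dC: "distinct C" and CV: "set C \<subseteq> V" unfolding is_cycle_def is_path_def by auto
  obtain i where i: "i < length C" "C!i = x2" using x(2) by (meson in_set_conv_nth)
  obtain j where j: "j < length C" "C!j = x1" using x(1) by (meson in_set_conv_nth)
  have "i \<noteq> j" using i j x(3) by auto
  then obtain A1 A2 where A: "goodarc C A1" "goodarc C A2" "hd A1 = x2" "last A1 = x1"
     "hd A2 = x2" "last A2 = x1" "length A1 + length A2 = length C + 2"
     "2 \<le> length A1" "2 \<le> length A2" using arcs[OF dC _ i(1) j(1)] i j by metis
  have Pne: "P \<noteq> []" and sPH: "set P \<subseteq> H" using P unfolding is_path_def by auto
  have sP: "set P \<inter> set C = {}" using sPH H by blast
  have cyc_of: "is_cycle V E (P@A)" if "goodarc C A" "hd A = x2" "last A = x1" "2 \<le> length A" for A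
  proof -
    have "A \<noteq> []" using that by auto
    hence "is_path E (set C) A" using goodarc_path[OF sg cyc that(1)] by simp
    thus ?thesis using mk_cycle[OF P(1) H(1) H(2) CV] that P sg_sym[OF sg] by auto
  qed
  have key: "length A = 2" if "goodarc C A" "hd A = x2" "last A = x1" "2 \<le> length A"
     "odd (length P + length A)" for A
  proof (rule ccontr)
    assume "length A \<noteq> 2"
    hence "3 \<le> length A" using that by simp
    moreover have "odd_cycle V E (P@A)" using cyc_of[OF that(1-4)] that(5) unfolding odd_cycle_def by simp
    ultimately show False using gstar_arc[OF gs oc _ that(1) _ Pne sP] by blast
  qed
  have "odd (length C)" using oc unfolding odd_cycle_def by simp
  hence "odd (length P + length A1) \<or> odd (length P + length A2)" using A(7) ev by presburger
  thus False
  proof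
    assume "odd (length P + length A1)"
    hence "length A1 = 2" using key A by blast
    thus False using ev \<open>odd (length P + length A1)\<close> by simp
  next
    assume "odd (length P + length A2)"
    hence "length A2 = 2" using key A by blast
    thus False using ev \<open>odd (length P + length A2)\<close> by simp
  qed
qed


lemma pre_lemma:
  assumes dQ: "distinct (Q@[x2,x1])" and ePQ: "cyc_edges (P@[x2,x1]) = cyc_edges (Q@[x2,x1])"
    and P: "is_path E H P" and Q: "is_path E H Q" and hd: "hd P = hd Q"
    and xH: "x1 \<notin> H" "x2 \<notin> H"
  shows "k < length P \<Longrightarrow> (\<forall>k'\<le>k. k' < length Q \<and> P!k' = Q!k')"
proof (induction k)
  case 0
  have "P \<noteq> []" "Q \<noteq> []" using P Q unfolding is_path_def by auto
  thus ?case using hd by (simp add: hd_conv_nth)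
next
  case (Suc k)
  hence IH: "\<forall>k'\<le>k. k' < length Q \<and> P!k' = Q!k'" by simp
  have dP: "distinct P" and sP: "set P \<subseteq> H" using P unfolding is_path_def by auto
  let ?DP = "P@[x2,x1]" and ?DQ = "Q@[x2,x1]"
  have kQ: "k < length Q" and pk: "P!k = Q!k" using IH by auto
  have "{?DP!k, ?DP!Suc k} \<in> cyc_edges ?DP" using cyc_edges_consec[of k ?DP] Suc by simp
  hence "{P!k, P!Suc k} \<in> cyc_edges ?DQ" using Suc ePQ by (simp add: nth_append)
  hence "{?DQ!k, P!Suc k} \<in> cyc_edges ?DQ" using kQ pk by (simp add: nth_append)
  from cyc_nbr[OF dQ _ _ this] kQ
  have c: "P!Suc k = ?DQ ! ((k+1) mod length ?DQ) \<or> (0 < k \<and> P!Suc k = ?DQ ! (k - 1))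
     \<or> (k = 0 \<and> P!Suc k = ?DQ ! (length ?DQ - 1))" by simp
  have yH: "P!Suc k \<in> H" using sP Suc by auto
  have "Suc k < length Q \<and> P!Suc k = Q!Suc k"
  proof -
    from c consider "P!Suc k = ?DQ ! ((k+1) mod length ?DQ)" | "0 < k" "P!Suc k = ?DQ ! (k - 1)"
      | "k = 0" "P!Suc k = ?DQ ! (length ?DQ - 1)" by blast
    thus ?thesis
    proof cases
      case 1
      have m: "(k+1) mod length ?DQ = Suc k" using kQ by simp
      show ?thesis
      proof (cases "Suc k < length Q")
        case True thus ?thesis using 1 m by (simp add: nth_append)
      next
        case False
        hence "Suc k = length Q" using kQ by simp
        hence "P!Suc k = x2" using 1 m by (simp add: nth_append)
        thus ?thesis using yH xH by simp
      qed
    next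
      case 2
      have "P!(k-1) = Q!(k-1)" "k - 1 < length Q" using IH by auto
      hence "P!Suc k = P!(k-1)" using 2 by (simp add: nth_append)
      moreover have "k - 1 < length P" using Suc by simp
      ultimately show ?thesis using nth_eq_iff_index_eq[OF dP, of "Suc k" "k-1"] Suc 2 by simp
    next
      case 3
      hence "P!Suc k = x1" by (simp add: nth_append)
      thus ?thesis using yH xH by simp
    qed
  qed
  thus ?case using IH le_Suc_eq by auto
qed

lemma tri_cycle:
  assumes sg: "sgraph V E" and gs: "in_Gstar V E" and oc: "odd_cycle V E C"
    and x: "x1 \<in> set C" "x2 \<in> set C" "E x1 x2"
    and H: "H \<inter> set C = {}" "H \<subseteq> V" and P: "is_path E H P" "E x1 (hd P)" "E x2 (last P)"
  shows "odd_cycle V E (P@[x2,x1])"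
proof -
  have cyc: "is_cycle V E C" using oc unfolding odd_cycle_def by simp
  hence CV: "set C \<subseteq> V" unfolding is_cycle_def is_path_def by auto
  have ne: "x1 \<noteq> x2" using x(3) sg unfolding sgraph_def by blast
  have "odd (length P)" using odd_P[OF sg gs oc x(1,2) ne H P] .
  moreover have "is_path E (set C) [x2,x1]" using x ne sg_sym[OF sg x(3)] unfolding is_path_def
    by (auto simp: less_Suc_eq)
  hence "is_cycle V E (P@[x2,x1])" using mk_cycle[OF P(1) H(1) H(2) CV] P sg_sym[OF sg] by auto
  ultimately show ?thesis unfolding odd_cycle_def by simp
qed

lemma uniq:
  assumes sg: "sgraph V E" and gs: "in_Gstar V E" and oc: "odd_cycle V E C"
    and x: "x1 \<in> set C" "x2 \<in> set C" "E x1 x2"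
    and H: "H \<inter> set C = {}" "H \<subseteq> V"
    and P: "is_path E H P" "E x1 (hd P)" "E x2 (last P)"
    and Q: "is_path E H Q" "E x1 (hd Q)" "E x2 (last Q)" and hd: "hd P = hd Q"
  shows "P = Q"
proof -
  let ?DP = "P@[x2,x1]" and ?DQ = "Q@[x2,x1]"
  have oP: "odd_cycle V E ?DP" using tri_cycle[OF sg gs oc x H P] .
  have oQ: "odd_cycle V E ?DQ" using tri_cycle[OF sg gs oc x H Q] .
  have Pne: "P \<noteq> []" and Qne: "Q \<noteq> []" and sP: "set P \<subseteq> H" using P Q unfolding is_path_def by auto
  have xH: "x1 \<notin> H" "x2 \<notin> H" using x H by auto
  have vH: "hd P \<in> H" using Pne sP by auto
  have e1: "{x2,x1} \<in> cyc_edges ?DP" "{x2,x1} \<in> cyc_edges ?DQ"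
    using cyc_edges_consec[of "length P" ?DP] cyc_edges_consec[of "length Q" ?DQ] by (auto simp: nth_append)
  have e2: "{x1, hd P} \<in> cyc_edges ?DP" "{x1, hd P} \<in> cyc_edges ?DQ"
    using cyc_edges_wrap[of ?DP] cyc_edges_wrap[of ?DQ] Pne Qne hd by auto
  have ne: "{x2,x1} \<noteq> {x1, hd P}" using vH xH by (auto simp: doubleton_eq_iff)
  have eq: "cyc_edges ?DP = cyc_edges ?DQ"
  proof (rule ccontr)
    assume "cyc_edges ?DP \<noteq> cyc_edges ?DQ"
    hence "card (cyc_edges ?DP \<inter> cyc_edges ?DQ) \<le> 1" using gs oP oQ unfolding in_Gstar_def by blast
    moreover have "card {{x2,x1}, {x1, hd P}} \<le> card (cyc_edges ?DP \<inter> cyc_edges ?DQ)"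
      using e1 e2 by (intro card_mono) (auto simp: finite_cyc_edges)
    ultimately show False using ne by simp
  qed
  have dP: "distinct ?DP" and dQ: "distinct ?DQ" using oP oQ unfolding odd_cycle_def is_cycle_def is_path_def by auto
  have a: "\<forall>k'\<le>length P - 1. k' < length Q \<and> P!k' = Q!k'"
    using pre_lemma[OF dQ eq P(1) Q(1) hd xH, of "length P - 1"] Pne by simp
  have b: "\<forall>k'\<le>length Q - 1. k' < length P \<and> Q!k' = P!k'"
    using pre_lemma[OF dP eq[symmetric] Q(1) P(1) hd[symmetric] xH, of "length Q - 1"] Qne by simp
  have "length P = length Q"
  proof -
    have "length P - 1 < length Q" "length Q - 1 < length P" using a b by auto
    thus ?thesis using Pne Qne by (cases P; cases Q) auto
  qed
  moreover have "\<forall>k < length P. P!k = Q!k" using a by auto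
  ultimately show ?thesis by (simp add: nth_equalityI)
qed


lemma exist_path:
  assumes comp: "component E (V - set C) H" and v: "v \<in> H" and t: "touches V E (set C) v x2"
  shows "\<exists>P. is_path E H P \<and> hd P = v \<and> E (last P) x2"
proof -
  obtain T where T: "is_path E V T" "hd T = v" "last T = x2" "set T \<inter> set C = {x2}"
    using t unfolding touches_def by blast
  have HS: "H \<subseteq> V - set C" and cl: "\<forall>u\<in>H. \<forall>x\<in>V - set C. E u x \<longrightarrow> x \<in> H"
    using comp unfolding component_def by auto
  have Tne: "T \<noteq> []" and dT: "distinct T" and sT: "successively E T" and TV: "set T \<subseteq> V"
    using T(1) unfolding is_path_succ by auto
  define P where "P = butlast T"
  have TP: "T = P @ [x2]" unfolding P_def using append_butlast_last_id[OF Tne] T(3) by simp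
  have "x2 \<in> set C" using T(4) by blast
  hence "v \<noteq> x2" using v HS by blast
  hence Pne: "P \<noteq> []" using TP T(2) by auto
  have dP: "distinct P" and x2P: "x2 \<notin> set P" using dT TP by auto
  have PC: "set P \<inter> set C = {}" using T(4) TP x2P by auto
  have PV: "set P \<subseteq> V" using TV TP by auto
  have sP: "successively E P" and lastE: "E (last P) x2"
    using sT Pne unfolding TP successively_append_iff by auto
  have hP: "hd P = v" using T(2) TP Pne by simp
  have inH: "k < length P \<Longrightarrow> P!k \<in> H" for k
  proof (induction k)
    case 0 thus ?case using hP Pne v by (simp add: hd_conv_nth)
  next
    case (Suc k)
    hence "P!k \<in> H" by simp
    moreover have "E (P!k) (P!Suc k)" using successively_nth[OF sP Suc.prems] .
    moreover have "P!Suc k \<in> V - set C" using Suc.prems PC PV nth_mem by blast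
    ultimately show ?case using cl by blast
  qed
  have "set P \<subseteq> H" using inH by (auto simp: in_set_conv_nth)
  hence "is_path E H P" using Pne dP sP unfolding is_path_succ by simp
  thus ?thesis using hP lastE by blast
qed

lemma dir:
  assumes sg: "sgraph V E" and gs: "in_Gstar V E" and oc: "odd_cycle V E C"
    and x: "x1 \<in> set C" "x2 \<in> set C" "E x1 x2"
    and ts: "\<forall>v \<in> V - set C. touch_set V E (set C) v = {x1, x2}"
    and comp: "component E (V - set C) H"
  shows "\<forall>v \<in> nbr_in E H x1. \<exists>!P. is_path E H P \<and> hd P = v \<and> last P \<in> nbr_in E H x2"
proof
  fix v assume vn: "v \<in> nbr_in E H x1"
  have HS: "H \<subseteq> V - set C" using comp unfolding component_def by auto
  hence H: "H \<inter> set C = {}" "H \<subseteq> V" by auto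
  have v: "v \<in> H" "E x1 v" using vn unfolding nbr_in_def by auto
  have "touches V E (set C) v x2" using ts v(1) HS unfolding touch_set_def by blast
  then obtain P where P: "is_path E H P" "hd P = v" "E (last P) x2" using exist_path[OF comp v(1)] by blast
  have "last P \<in> H" using P(1) unfolding is_path_def by auto
  hence Pn: "last P \<in> nbr_in E H x2" using P(3) sg_sym[OF sg] unfolding nbr_in_def by auto
  show "\<exists>!P. is_path E H P \<and> hd P = v \<and> last P \<in> nbr_in E H x2"
  proof (rule ex1I[of _ P])
    show "is_path E H P \<and> hd P = v \<and> last P \<in> nbr_in E H x2" using P Pn by simp
  next
    fix Q assume Q: "is_path E H Q \<and> hd Q = v \<and> last Q \<in> nbr_in E H x2"
    show "Q = P"
      using uniq[OF sg gs oc x H, of Q P] Q P Pn v unfolding nbr_in_def by auto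
  qed
qed

theorem mainTheorem8:
  fixes V :: "'a set" and E :: "'a \<Rightarrow> 'a \<Rightarrow> bool" and C :: "'a list"
    and x1 x2 :: 'a and H :: "'a set"
  assumes "sgraph V E"
    and "in_Gstar V E"
    and "two_connected V E"
    and "longest_odd_cycle V E C"
    and "5 \<le> length C"
    and "V - set C \<noteq> {}"
    and "x1 \<in> set C" and "x2 \<in> set C" and "E x1 x2"
    and "\<forall>v \<in> V - set C. touch_set V E (set C) v = {x1, x2}"
    and "component E (V - set C) H"
  shows "(\<forall>v \<in> nbr_in E H x1. \<exists>!P. is_path E H P \<and> hd P = v \<and> last P \<in> nbr_in E H x2) \<and>
         (\<forall>v \<in> nbr_in E H x2. \<exists>!P. is_path E H P \<and> hd P = v \<and> last P \<in> nbr_in E H x1)"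
proof
  have oc: "odd_cycle V E C" using assms(4) unfolding longest_odd_cycle_def by simp
  show "\<forall>v \<in> nbr_in E H x1. \<exists>!P. is_path E H P \<and> hd P = v \<and> last P \<in> nbr_in E H x2"
    using dir[OF assms(1,2) oc assms(7,8,9,10,11)] .
  have ts: "\<forall>v \<in> V - set C. touch_set V E (set C) v = {x2, x1}" using assms(10) by (simp add: insert_commute)
  show "\<forall>v \<in> nbr_in E H x2. \<exists>!P. is_path E H P \<and> hd P = v \<and> last P \<in> nbr_in E H x1"
    using dir[OF assms(1,2) oc assms(8,7) sg_sym[OF assms(1,9)] ts assms(11)] .
qed

end
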